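(* Let $\mathcal{X}=\bigsqcup_{j=1}^m\mathcal{X}_j$ be a finite partitioned set, $T$ a block-invariant row-stochastic matrix on $\mathcal{X}$, $p_0\in\mathcal{P}(\mathcal{X})$, and $p_{n+1}=p_nT$ for $n=0,\dots,N-1$. Set $q_n:=p_nT$, $D_n:=D_{\mathrm{KL}}(p_n\|q_n)$, $\Delta V_n:=V(p_n)-V(p_{n+1})$, and $\mathcal{S}_n:=D_n+\Delta V_n$, where $V$ is the KL potential relative to $p_0$, and assume $V(p_0)<\infty$. Then $\mathcal{S}_n\ge 0$ for every $n=0,1,\dots,N-1$, and consequently $$\mathcal{S}^{[0:N)}:=\sum_{n=0}^{N-1}\mathcal{S}_n=\sum_{n=0}^{N-1}D_n+V(p_0)-V(p_N)\ \ge 0.$$ Moreover $\mathcal{S}_n=0$ if and only if $D_n=0$ and $\Delta V_n=0$.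
   Context: $\mathcal{P}(\mathcal{X})$ is the set of probability distributions (row vectors) on $\mathcal{X}$. Block invariance: $\sum_{y\in\mathcal{X}_j}T(x,y)=1$ for all $x\in\mathcal{X}_j$, all $j$. $T_j$ is the restriction of $T$ to block $\mathcal{X}_j$, $\mathcal{I}_j=\{\pi\in\mathcal{P}(\mathcal{X}_j):\pi T_j=\pi\}$, $w_j(p)=\sum_{x\in\mathcal{X}_j}p(x)$, $\Pi(p_0)=\{\sum_j w_j(p_0)\pi_j:\pi_j\in\mathcal{I}_j\}$ (each $\pi_j$ extended by zero outside $\mathcal{X}_j$), and the KL potential is $V(p)=\inf_{\pi\in\Pi(p_0)}D_{\mathrm{KL}}(p\|\pi)$. $D_{\mathrm{KL}}(p\|q)=\sum_x p(x)\log\frac{p(x)}{q(x)}$ with $0\log(0/q)=0$, $p\log(p/0)=+\infty$ for $p>0$. *)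

theory Defs
  imports "HOL-Analysis.Analysis"
begin

text \<open>The partition into blocks
X_1, ..., X_m is given by a block-label function blk, X_j = {x. blk x = j}.\<close>

definition is_dist :: "('a::finite \<Rightarrow> real) \<Rightarrow> bool" where
  "is_dist p \<longleftrightarrow> (\<forall>x. 0 \<le> p x) \<and> (\<Sum>x\<in>UNIV. p x) = 1"

definition row_stochastic :: "('a::finite \<Rightarrow> 'a \<Rightarrow> real) \<Rightarrow> bool" where
  "row_stochastic T \<longleftrightarrow> (\<forall>x y. 0 \<le> T x y) \<and> (\<forall>x. (\<Sum>y\<in>UNIV. T x y) = 1)"

definition block :: "('a \<Rightarrow> nat) \<Rightarrow> nat \<Rightarrow> 'a set" where
  "block blk j = {x. blk x = j}"

definition block_partition :: "('a \<Rightarrow> nat) \<Rightarrow> nat \<Rightarrow> bool" where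
  "block_partition blk m \<longleftrightarrow> (\<forall>x. blk x \<in> {1..m}) \<and> (\<forall>j\<in>{1..m}. block blk j \<noteq> {})"

definition block_invariant :: "('a::finite \<Rightarrow> nat) \<Rightarrow> nat \<Rightarrow> ('a \<Rightarrow> 'a \<Rightarrow> real) \<Rightarrow> bool" where
  "block_invariant blk m T \<longleftrightarrow>
     (\<forall>j\<in>{1..m}. \<forall>x\<in>block blk j. (\<Sum>y\<in>block blk j. T x y) = 1)"

definition vecmat :: "('a::finite \<Rightarrow> real) \<Rightarrow> ('a \<Rightarrow> 'a \<Rightarrow> real) \<Rightarrow> 'a \<Rightarrow> real" where
  "vecmat p T = (\<lambda>y. \<Sum>x\<in>UNIV. p x * T x y)"

definition KL :: "('a::finite \<Rightarrow> real) \<Rightarrow> ('a \<Rightarrow> real) \<Rightarrow> ereal" where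
  "KL p q = (if (\<exists>x. p x > 0 \<and> q x = 0) then \<infinity>
             else ereal (\<Sum>x\<in>{x. p x > 0}. p x * ln (p x / q x)))"

definition wblk :: "('a::finite \<Rightarrow> nat) \<Rightarrow> nat \<Rightarrow> ('a \<Rightarrow> real) \<Rightarrow> real" where
  "wblk blk j p = (\<Sum>x\<in>block blk j. p x)"

text \<open>I_j: distributions on X_j (extended by zero) invariant under the restriction T_j.\<close>
definition inv_blk :: "('a::finite \<Rightarrow> nat) \<Rightarrow> ('a \<Rightarrow> 'a \<Rightarrow> real) \<Rightarrow> nat \<Rightarrow> ('a \<Rightarrow> real) set" where
  "inv_blk blk T j = {\<pi>. (\<forall>x. 0 \<le> \<pi> x) \<and> (\<forall>x. x \<notin> block blk j \<longrightarrow> \<pi> x = 0)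
        \<and> (\<Sum>x\<in>block blk j. \<pi> x) = 1
        \<and> (\<forall>y\<in>block blk j. (\<Sum>x\<in>block blk j. \<pi> x * T x y) = \<pi> y)}"

definition Pi_set :: "('a::finite \<Rightarrow> nat) \<Rightarrow> nat \<Rightarrow> ('a \<Rightarrow> 'a \<Rightarrow> real) \<Rightarrow> ('a \<Rightarrow> real) \<Rightarrow> ('a \<Rightarrow> real) set" where
  "Pi_set blk m T p0 = {(\<lambda>x. \<Sum>j\<in>{1..m}. wblk blk j p0 * \<pi>s j x) | \<pi>s.
        \<forall>j\<in>{1..m}. \<pi>s j \<in> inv_blk blk T j}"

definition Vpot :: "('a::finite \<Rightarrow> nat) \<Rightarrow> nat \<Rightarrow> ('a \<Rightarrow> 'a \<Rightarrow> real) \<Rightarrow> ('a \<Rightarrow> real) \<Rightarrow> ('a \<Rightarrow> real) \<Rightarrow> ereal" where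
  "Vpot blk m T p0 p = (INF \<pi>\<in>Pi_set blk m T p0. KL p \<pi>)"

end

theory Submission
  imports Defs
begin

lemma sum_Collect_if:
  "(\<Sum>x\<in>{x::'a::finite. P x}. f x) = (\<Sum>x\<in>UNIV. if P x then f x else 0)"
  by (simp add: sum.If_cases)

lemma key_ln:
  fixes a b :: real assumes "a > 0" "b > 0"
  shows "a * ln (a / b) \<ge> a - b"
proof -
  have "ln (b / a) \<le> b / a - 1" using assms by (intro ln_le_minus_one) simp
  moreover have "ln (a / b) = - ln (b / a)" using assms by (simp add: ln_div)
  ultimately have "ln (a / b) \<ge> 1 - b / a" by linarith
  hence "a * ln (a / b) \<ge> a * (1 - b / a)" using assms by (intro mult_left_mono) auto
  also have "a * (1 - b / a) = a - b" using assms by (simp add: field_simps)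
  finally show ?thesis .
qed

lemma dist_vecmat:
  assumes "is_dist p" "row_stochastic T"
  shows "is_dist (vecmat p T)"
proof -
  have "(\<Sum>y\<in>UNIV. \<Sum>x\<in>UNIV. p x * T x y) = (\<Sum>x\<in>UNIV. p x * (\<Sum>y\<in>UNIV. T x y))"
    by (subst sum.swap) (simp add: sum_distrib_left)
  also have "\<dots> = 1" using assms by (simp add: is_dist_def row_stochastic_def)
  finally show ?thesis using assms unfolding is_dist_def row_stochastic_def vecmat_def
    by (auto intro!: sum_nonneg)
qed

lemma gibbs:
  assumes p: "is_dist p" and q: "\<forall>x. q x \<ge> 0" and qs: "sum q UNIV \<le> 1"
  shows "KL p q \<ge> 0"
proof (cases "\<exists>x. p x > 0 \<and> q x = 0")
  case True thus ?thesis by (simp add: KL_def)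
next
  case False
  let ?P = "{x. p x > 0}"
  have "(\<Sum>x\<in>?P. p x * ln (p x / q x)) \<ge> (\<Sum>x\<in>?P. p x - q x)"
    apply (rule sum_mono) using False q key_ln by (metis less_eq_real_def mem_Collect_eq)
  moreover have "(\<Sum>x\<in>?P. p x) = 1"
  proof -
    have "(\<Sum>x\<in>?P. p x) = sum p UNIV"
      apply (rule sum.mono_neutral_left) using p by (auto simp: is_dist_def less_eq_real_def)
    thus ?thesis using p by (simp add: is_dist_def)
  qed
  moreover have "(\<Sum>x\<in>?P. q x) \<le> 1"
    using sum_mono2[of UNIV ?P q] q qs by auto
  ultimately have "(\<Sum>x\<in>?P. p x * ln (p x / q x)) \<ge> 0" by (simp add: sum_subtractf)
  thus ?thesis using False by (simp add: KL_def)
qed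


lemma dpi:
  fixes p \<pi> :: "'a::finite \<Rightarrow> real"
  assumes p: "is_dist p" and T: "row_stochastic T" and pnn: "\<forall>x. \<pi> x \<ge> 0"
    and inv: "\<forall>y. (\<Sum>x\<in>UNIV. \<pi> x * T x y) = \<pi> y"
    and fin: "\<not> (\<exists>x. p x > 0 \<and> \<pi> x = 0)"
  shows "KL (vecmat p T) \<pi> \<le> KL p \<pi>"
proof -
  define r where "r = vecmat p T"
  have r: "r y = (\<Sum>x\<in>UNIV. p x * T x y)" for y by (simp add: r_def vecmat_def)
  have p0: "p x \<ge> 0" for x using p by (simp add: is_dist_def)
  have T0: "T x y \<ge> 0" for x y using T by (simp add: row_stochastic_def)
  have T1: "(\<Sum>y\<in>UNIV. T x y) = 1" for x using T by (simp add: row_stochastic_def)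
  have a0: "p x * T x y \<ge> 0" for x y using p0 T0 by simp
  have ale: "p x * T x y \<le> r y" for x y
    unfolding r by (rule member_le_sum) (use a0 in auto)
  have pix: "\<pi> x > 0" if "p x * T x y > 0" for x y
  proof -
    have "p x > 0" using that p0[of x] T0[of x y]
      by (metis less_eq_real_def mult_zero_left)
    thus ?thesis using fin pnn by (metis less_eq_real_def)
  qed
  have piy: "\<pi> y > 0" if "p x * T x y > 0" for x y
  proof -
    have "T x y > 0" using that p0[of x] T0[of x y]
      by (metis less_eq_real_def mult_zero_right)
    hence "\<pi> x * T x y > 0" using pix[OF that] by simp
    also have "\<pi> x * T x y \<le> (\<Sum>x\<in>UNIV. \<pi> x * T x y)"
      by (rule member_le_sum) (use pnn T0 in auto)
    finally show ?thesis using inv by simp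
  qed
  have rpos: "\<pi> y > 0" if "r y > 0" for y
  proof -
    have "\<exists>x. p x * T x y > 0"
    proof (rule ccontr)
      assume "\<not> ?thesis"
      hence "r y \<le> 0" unfolding r by (intro sum_nonpos) (simp add: not_less)
      thus False using that by simp
    qed
    thus ?thesis using piy by blast
  qed
  have finr: "\<not> (\<exists>y. r y > 0 \<and> \<pi> y = 0)" using rpos by force
  define L1 where "L1 = (\<Sum>x\<in>UNIV. p x * ln (p x / \<pi> x))"
  define L2 where "L2 = (\<Sum>y\<in>UNIV. r y * ln (r y / \<pi> y))"
  define F where "F x y = (if p x * T x y > 0 then T x y * \<pi> x * r y / \<pi> y else 0)" for x y
  have pt: "p x * T x y * ln (p x / \<pi> x) - p x * T x y * ln (r y / \<pi> y) \<ge> p x * T x y - F x y"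
    for x y
  proof (cases "p x * T x y > 0")
    case False
    hence z: "p x * T x y = 0" using a0[of x y] by simp
    have "F x y = 0" using False by (simp add: F_def)
    thus ?thesis unfolding z by simp
  next
    case True
    have px: "p x > 0" using True p0[of x] T0[of x y] by (metis less_eq_real_def mult_zero_left)
    have tx: "T x y > 0" using True p0[of x] T0[of x y] by (metis less_eq_real_def mult_zero_right)
    have ry: "r y > 0" using ale[of x y] True by simp
    have pxx: "\<pi> x > 0" using pix[OF True] .
    have pyy: "\<pi> y > 0" using piy[OF True] .
    have bpos: "T x y * \<pi> x * r y / \<pi> y > 0" using tx ry pxx pyy by simp
    have "ln (p x / \<pi> x) - ln (r y / \<pi> y) = ln ((p x / \<pi> x) / (r y / \<pi> y))"
      using px ry pxx pyy by (simp add: ln_div ln_mult)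
    also have "(p x / \<pi> x) / (r y / \<pi> y) = (p x * T x y) / (T x y * \<pi> x * r y / \<pi> y)"
      using tx ry pxx pyy by (simp add: field_simps)
    finally have e: "ln (p x / \<pi> x) - ln (r y / \<pi> y) = ln ((p x * T x y) / (T x y * \<pi> x * r y / \<pi> y))" .
    have "p x * T x y * ln (p x / \<pi> x) - p x * T x y * ln (r y / \<pi> y)
        = p x * T x y * (ln (p x / \<pi> x) - ln (r y / \<pi> y))" by (simp add: algebra_simps)
    also have "\<dots> \<ge> p x * T x y - T x y * \<pi> x * r y / \<pi> y"
      unfolding e by (rule key_ln[OF True bpos])
    finally show ?thesis using True by (simp add: F_def)
  qed
  have S1: "(\<Sum>x\<in>UNIV. \<Sum>y\<in>UNIV. p x * T x y * ln (p x / \<pi> x)) = L1"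
    unfolding L1_def
  proof (rule sum.cong[OF refl])
    fix x
    have "(\<Sum>y\<in>UNIV. p x * T x y * ln (p x / \<pi> x)) = p x * ln (p x / \<pi> x) * (\<Sum>y\<in>UNIV. T x y)"
      by (simp add: sum_distrib_left sum_distrib_right mult_ac)
    thus "(\<Sum>y\<in>UNIV. p x * T x y * ln (p x / \<pi> x)) = p x * ln (p x / \<pi> x)" using T1 by simp
  qed
  have S2: "(\<Sum>x\<in>UNIV. \<Sum>y\<in>UNIV. p x * T x y * ln (r y / \<pi> y)) = L2"
    unfolding L2_def
    by (subst sum.swap) (simp add: r sum_distrib_right)
  have S3: "(\<Sum>x\<in>UNIV. \<Sum>y\<in>UNIV. p x * T x y) = 1"
  proof -
    have "(\<Sum>x\<in>UNIV. \<Sum>y\<in>UNIV. p x * T x y) = (\<Sum>x\<in>UNIV. p x * (\<Sum>y\<in>UNIV. T x y))"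
      by (simp add: sum_distrib_left)
    thus ?thesis using T1 p by (simp add: is_dist_def)
  qed
  have S4: "(\<Sum>x\<in>UNIV. \<Sum>y\<in>UNIV. F x y) \<le> 1"
  proof -
    have "(\<Sum>x\<in>UNIV. \<Sum>y\<in>UNIV. F x y) \<le> (\<Sum>x\<in>UNIV. \<Sum>y\<in>UNIV. (r y / \<pi> y) * (\<pi> x * T x y))"
    proof (intro sum_mono)
      fix x y
      have rnn: "r y \<ge> 0" unfolding r using a0 by (intro sum_nonneg) auto
      have "0 \<le> r y / \<pi> y * (\<pi> x * T x y)" using rnn pnn T0 by simp
      moreover have "T x y * \<pi> x * r y / \<pi> y = r y / \<pi> y * (\<pi> x * T x y)" by simp
      ultimately show "F x y \<le> r y / \<pi> y * (\<pi> x * T x y)" unfolding F_def by (simp only:) auto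
    qed
    also have "\<dots> = (\<Sum>y\<in>UNIV. (r y / \<pi> y) * \<pi> y)"
      by (subst sum.swap) (simp only: sum_distrib_left[symmetric] inv)
    also have "\<dots> = (\<Sum>y\<in>UNIV. r y)"
    proof (rule sum.cong[OF refl])
      fix y
      show "r y / \<pi> y * \<pi> y = r y"
      proof (cases "\<pi> y = 0")
        case True
        hence "\<not> r y > 0" using rpos by force
        moreover have "r y \<ge> 0" unfolding r using a0 by (intro sum_nonneg) auto
        ultimately show ?thesis using True by simp
      qed simp
    qed
    also have "\<dots> = 1" using S3 unfolding r by (subst sum.swap) simp
    finally show ?thesis .
  qed
  have "(\<Sum>x\<in>UNIV. \<Sum>y\<in>UNIV. p x * T x y * ln (p x / \<pi> x) - p x * T x y * ln (r y / \<pi> y))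
     \<ge> (\<Sum>x\<in>UNIV. \<Sum>y\<in>UNIV. p x * T x y - F x y)"
    by (intro sum_mono pt)
  hence "L1 - L2 \<ge> 1 - (\<Sum>x\<in>UNIV. \<Sum>y\<in>UNIV. F x y)"
    using S1 S2 S3 by (simp add: sum_subtractf)
  hence le: "L2 \<le> L1" using S4 by linarith
  have "L1 = (\<Sum>x\<in>{x. p x > 0}. p x * ln (p x / \<pi> x))"
    unfolding sum_Collect_if L1_def using p0
    by (intro sum.cong) (auto simp: less_eq_real_def)
  moreover have "L2 = (\<Sum>y\<in>{y. r y > 0}. r y * ln (r y / \<pi> y))"
  proof -
    have "r y \<ge> 0" for y unfolding r using a0 by (intro sum_nonneg) auto
    thus ?thesis unfolding sum_Collect_if L2_def
      by (intro sum.cong) (auto simp: less_eq_real_def)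
  qed
  ultimately show ?thesis using le fin finr unfolding KL_def r_def[symmetric] by simp
qed


lemma blk_inv_col:
  assumes stoch: "row_stochastic T" and binv: "block_invariant blk m T"
    and j: "j \<in> {1..m}" and \<pi>: "\<pi> \<in> inv_blk blk T j"
  shows "(\<Sum>x\<in>UNIV. \<pi> x * T x y) = \<pi> y"
proof -
  have out: "\<pi> x = 0" if "x \<notin> block blk j" for x using \<pi> that by (simp add: inv_blk_def)
  have "(\<Sum>x\<in>UNIV. \<pi> x * T x y) = (\<Sum>x\<in>block blk j. \<pi> x * T x y)"
    by (rule sum.mono_neutral_right) (auto simp: out)
  also have "\<dots> = \<pi> y"
  proof (cases "y \<in> block blk j")
    case True thus ?thesis using \<pi> by (simp add: inv_blk_def)
  next
    case False
    have "T x y = 0" if x: "x \<in> block blk j" for x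
    proof -
      have s1: "(\<Sum>y\<in>block blk j. T x y) = 1" using binv j x by (simp add: block_invariant_def)
      have s2: "(\<Sum>y\<in>UNIV. T x y) = 1" using stoch by (simp add: row_stochastic_def)
      have "(\<Sum>y\<in>UNIV - block blk j. T x y) = 0"
        using sum.subset_diff[of "block blk j" UNIV "T x"] s1 s2 by simp
      hence "\<forall>y\<in>UNIV - block blk j. T x y = 0"
        using stoch by (subst (asm) sum_nonneg_eq_0_iff) (auto simp: row_stochastic_def)
      thus ?thesis using False by simp
    qed
    thus ?thesis using out[OF False] by simp
  qed
  finally show ?thesis .
qed

lemma Pi_props:
  assumes part: "block_partition blk m" and stoch: "row_stochastic T"
    and binv: "block_invariant blk m T" and p0: "is_dist p0"
    and \<pi>: "\<pi> \<in> Pi_set blk m T p0"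
  shows "(\<forall>x. \<pi> x \<ge> 0) \<and> sum \<pi> UNIV = 1 \<and> (\<forall>y. (\<Sum>x\<in>UNIV. \<pi> x * T x y) = \<pi> y)"
proof -
  obtain \<pi>s where \<pi>e: "\<pi> = (\<lambda>x. \<Sum>j\<in>{1..m}. wblk blk j p0 * \<pi>s j x)"
    and \<pi>s: "\<forall>j\<in>{1..m}. \<pi>s j \<in> inv_blk blk T j"
    using \<pi> unfolding Pi_set_def by blast
  have w0: "wblk blk j p0 \<ge> 0" for j using p0 unfolding wblk_def is_dist_def by (simp add: sum_nonneg)
  have nn: "\<forall>x. \<pi> x \<ge> 0"
    unfolding \<pi>e using \<pi>s w0 by (auto intro!: sum_nonneg simp: inv_blk_def)
  have s1: "sum (\<pi>s j) UNIV = 1" if j: "j \<in> {1..m}" for j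
  proof -
    have "sum (\<pi>s j) UNIV = sum (\<pi>s j) (block blk j)"
      by (rule sum.mono_neutral_right) (use \<pi>s j in \<open>auto simp: inv_blk_def\<close>)
    thus ?thesis using \<pi>s j by (simp add: inv_blk_def)
  qed
  have "sum \<pi> UNIV = (\<Sum>j\<in>{1..m}. wblk blk j p0 * sum (\<pi>s j) UNIV)"
    unfolding \<pi>e by (subst sum.swap) (simp add: sum_distrib_left)
  also have "\<dots> = (\<Sum>j\<in>{1..m}. wblk blk j p0)" using s1 by simp
  also have "\<dots> = sum p0 UNIV"
    unfolding wblk_def block_def
  proof -
    have "range blk \<subseteq> {1..m}" using part by (auto simp: block_partition_def)
    thus "(\<Sum>j\<in>{1..m}. sum p0 {x. blk x = j}) = sum p0 UNIV"
      using sum.group[of UNIV "{1..m}" blk p0] by simp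
  qed
  also have "\<dots> = 1" using p0 by (simp add: is_dist_def)
  finally have sm: "sum \<pi> UNIV = 1" .
  have inv: "(\<Sum>x\<in>UNIV. \<pi> x * T x y) = \<pi> y" for y
  proof -
    have "(\<Sum>x\<in>UNIV. \<pi> x * T x y) = (\<Sum>j\<in>{1..m}. wblk blk j p0 * (\<Sum>x\<in>UNIV. \<pi>s j x * T x y))"
      unfolding \<pi>e sum_distrib_right sum_distrib_left by (subst sum.swap) (simp add: mult_ac)
    also have "\<dots> = \<pi> y" unfolding \<pi>e
      using blk_inv_col[OF stoch binv] \<pi>s by simp
    finally show ?thesis .
  qed
  show ?thesis using nn sm inv by blast
qed


theorem theorem2:
  fixes blk :: "'a::finite \<Rightarrow> nat" and m N :: nat
    and T :: "'a \<Rightarrow> 'a \<Rightarrow> real" and p :: "nat \<Rightarrow> 'a \<Rightarrow> real"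
  defines "V \<equiv> Vpot blk m T (p 0)"
  defines "D \<equiv> (\<lambda>n. KL (p n) (vecmat (p n) T))"
  defines "\<Delta>V \<equiv> (\<lambda>n. V (p n) - V (p (Suc n)))"
  defines "S \<equiv> (\<lambda>n. D n + \<Delta>V n)"
  assumes part: "block_partition blk m"
    and stoch: "row_stochastic T"
    and binv: "block_invariant blk m T"
    and p0: "is_dist (p 0)"
    and step: "\<forall>n<N. p (Suc n) = vecmat (p n) T"
    and V0: "V (p 0) < \<infinity>"
  shows "(\<forall>n<N. S n \<ge> 0)
       \<and> (\<Sum>n<N. S n) = (\<Sum>n<N. D n) + V (p 0) - V (p N)
       \<and> (\<Sum>n<N. S n) \<ge> 0
       \<and> (\<forall>n<N. S n = 0 \<longleftrightarrow> D n = 0 \<and> \<Delta>V n = 0)"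
proof -
  have pd: "n \<le> N \<Longrightarrow> is_dist (p n)" for n
  proof (induction n)
    case 0 thus ?case using p0 by simp
  next
    case (Suc n) thus ?case using step dist_vecmat[OF _ stoch] by simp
  qed
  have Pp: "\<pi> \<in> Pi_set blk m T (p 0) \<Longrightarrow>
      (\<forall>x. \<pi> x \<ge> 0) \<and> sum \<pi> UNIV = 1 \<and> (\<forall>y. (\<Sum>x\<in>UNIV. \<pi> x * T x y) = \<pi> y)" for \<pi>
    using Pi_props[OF part stoch binv p0] by blast
  have Vnn: "V q \<ge> 0" if q: "is_dist q" for q
    unfolding V_def Vpot_def
  proof (rule INF_greatest)
    fix \<pi> assume "\<pi> \<in> Pi_set blk m T (p 0)"
    thus "0 \<le> KL q \<pi>" using Pp gibbs[OF q] by simp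
  qed
  have Vmono: "V (vecmat q T) \<le> V q" if q: "is_dist q" for q
    unfolding V_def Vpot_def
  proof (rule INF_mono)
    fix \<pi> assume \<pi>: "\<pi> \<in> Pi_set blk m T (p 0)"
    have "KL (vecmat q T) \<pi> \<le> KL q \<pi>"
    proof (cases "\<exists>x. q x > 0 \<and> \<pi> x = 0")
      case True thus ?thesis by (simp add: KL_def)
    next
      case False thus ?thesis using dpi[OF q stoch] Pp[OF \<pi>] by blast
    qed
    thus "\<exists>\<pi>'\<in>Pi_set blk m T (p 0). KL (vecmat q T) \<pi>' \<le> KL q \<pi>" using \<pi> by blast
  qed
  have Vle: "n \<le> N \<Longrightarrow> V (p n) \<le> V (p 0)" for n
  proof (induction n)
    case 0 thus ?case by simp
  next
    case (Suc n)
    hence "V (p (Suc n)) \<le> V (p n)" using step Vmono pd by simp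
    thus ?case using Suc by simp
  qed
  define v where "v n = real_of_ereal (V (p n))" for n
  have Vv: "V (p n) = ereal (v n)" and v0: "v n \<ge> 0" if "n \<le> N" for n
  proof -
    have a: "V (p n) \<ge> 0" using Vnn pd that by blast
    have b: "V (p n) < \<infinity>" using Vle[OF that] V0 by (rule le_less_trans)
    from a b show "V (p n) = ereal (v n)" unfolding v_def by (cases "V (p n)") auto
    from a b show "v n \<ge> 0" unfolding v_def by (cases "V (p n)") auto
  qed
  have vdec: "v (Suc n) \<le> v n" if "n < N" for n
    using Vmono[OF pd, of n] step that Vv[of n] Vv[of "Suc n"] by simp
  have dV: "\<Delta>V n = ereal (v n - v (Suc n))" if "n < N" for n
    using that Vv[of n] Vv[of "Suc n"] unfolding \<Delta>V_def by simp
  have Dnn: "D n \<ge> 0" if "n < N" for n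
  proof -
    have "is_dist (vecmat (p n) T)" using dist_vecmat[OF pd stoch] that by simp
    thus ?thesis unfolding D_def using that pd
      by (intro gibbs) (auto simp: is_dist_def)
  qed
  have Snn: "\<forall>n<N. S n \<ge> 0"
    using Dnn dV vdec unfolding S_def by (simp add: add_nonneg_nonneg)
  have sumdV: "(\<Sum>n<N. \<Delta>V n) = ereal (v 0 - v N)"
  proof -
    have "(\<Sum>n<N. \<Delta>V n) = (\<Sum>n<N. ereal (v n - v (Suc n)))"
      using dV by (intro sum.cong) auto
    also have "\<dots> = ereal (\<Sum>n<N. v n - v (Suc n))" by (simp add: sum_ereal)
    also have "\<dots> = ereal (v 0 - v N)" by (simp add: sum_lessThan_telescope')
    finally show ?thesis .
  qed
  have sumD: "(\<Sum>n<N. D n) \<ge> 0" using Dnn by (intro sum_nonneg) auto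
  have eq: "(\<Sum>n<N. S n) = (\<Sum>n<N. D n) + V (p 0) - V (p N)"
  proof -
    have "(\<Sum>n<N. S n) = (\<Sum>n<N. D n) + ereal (v 0 - v N)"
      unfolding S_def by (simp add: sum.distrib sumdV)
    also have "\<dots> = (\<Sum>n<N. D n) + V (p 0) - V (p N)"
      using sumD Vv[of 0] Vv[of N] by (cases "\<Sum>n<N. D n") auto
    finally show ?thesis .
  qed
  have zero: "\<forall>n<N. S n = 0 \<longleftrightarrow> D n = 0 \<and> \<Delta>V n = 0"
  proof (intro allI impI)
    fix n assume n: "n < N"
    have d: "v n - v (Suc n) \<ge> 0" using vdec[OF n] by simp
    show "S n = 0 \<longleftrightarrow> D n = 0 \<and> \<Delta>V n = 0"
      using Dnn[OF n] dV[OF n] d unfolding S_def by (cases "D n") auto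
  qed
  have "(\<Sum>n<N. S n) \<ge> 0" using Snn by (intro sum_nonneg) auto
  with Snn eq zero show ?thesis by blast
qed

end
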